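(* Let $u_0,\theta_0,\psi_0\in\mathbb R$ satisfy $a_ju_0+1>0$ for $j=1,\ldots,m$, and suppose $A:=Q(u_0)^{1/2}\sin\theta_0\in(0,1)$. Then there exist unique solutions $u(t),\theta(t),\psi(t)$, defined for all $t\in\mathbb R$, of \[\frac{du}{dt}=2Q(u)^{1/2}\cos\theta,\] \[\frac{d\theta}{dt}=-Q(u)^{1/2}\sin\theta\sum_{j=1}^m\frac{a_j}{a_ju+1},\] \[\frac{d\psi}{dt}=-Q(u)^{1/2}\sin\theta\sum_{j=1}^m\frac{a_j^2}{a_ju+1},\] with $u(0)=u_0$, $\theta(0)=\theta_0$ and $\psi(0)=\psi_0$. Moreover, $u$ and $\theta$ are nonconstant and periodic with some period $T>0$, and there exists $\Psi>0$ with $\psi(t+T)=\psi(t)-\Psi$ for all $t\in\mathbb R$.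
   Context: Standing assumptions: $m\ge3$, and $a_1\le\cdots\le a_m$ are integers, not all zero, with highest common factor $1$ and $a_1+\cdots+a_m=0$. $Q(u)=\prod_{j=1}^m(a_ju+1)$. *)

theory Defs
  imports Complex_Main
begin

definition Qpoly :: "(nat \<Rightarrow> int) \<Rightarrow> nat \<Rightarrow> real \<Rightarrow> real" where
  "Qpoly a m u = (\<Prod>j=1..m. of_int (a j) * u + 1)"

definition is_solution ::
  "(nat \<Rightarrow> int) \<Rightarrow> nat \<Rightarrow> (real \<Rightarrow> real) \<Rightarrow> (real \<Rightarrow> real) \<Rightarrow> (real \<Rightarrow> real) \<Rightarrow> bool" where
  "is_solution a m u \<theta> \<psi> \<longleftrightarrow>
     (\<forall>t. \<forall>j\<in>{1..m}. of_int (a j) * u t + 1 > 0) \<and>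
     (\<forall>t. (u has_real_derivative 2 * sqrt (Qpoly a m (u t)) * cos (\<theta> t)) (at t)) \<and>
     (\<forall>t. (\<theta> has_real_derivative
            - sqrt (Qpoly a m (u t)) * sin (\<theta> t) *
              (\<Sum>j=1..m. of_int (a j) / (of_int (a j) * u t + 1))) (at t)) \<and>
     (\<forall>t. (\<psi> has_real_derivative
            - sqrt (Qpoly a m (u t)) * sin (\<theta> t) *
              (\<Sum>j=1..m. (of_int (a j))^2 / (of_int (a j) * u t + 1))) (at t))"

end

theory Submission
  imports Defs "HOL-Analysis.Analysis" "HOL-Computational_Algebra.Polynomial"
begin

lemma antideriv_exists:
  fixes f :: "real \<Rightarrow> real" and c :: real
  assumes cf: "continuous_on UNIV f"
  shows "\<exists>G. G c = 0 \<and> (\<forall>x. (G has_real_derivative f x) (at x))"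
proof -
  define G where "G = (\<lambda>u::real. LBINT y=c..u. f y)"
  have "(G has_real_derivative f x) (at x)" for x
  proof -
  define a where "a = min c x - 1"
  define b where "b = max c x + 1"
  have c1: "continuous_on {a..b} f" using cf by (rule continuous_on_subset) simp
  have "((\<lambda>u. LBINT y=c..u. f y) has_vector_derivative (f x)) (at x within {a..b})"
    by (rule interval_integral_FTC2[OF _ _ c1]) (simp_all add: a_def b_def)
  moreover have "at x within {a..b} = at x"
    by (rule at_within_Icc_at) (simp_all add: a_def b_def)
  ultimately show ?thesis unfolding G_def
    by (simp add: has_real_derivative_iff_has_vector_derivative)
  qed
  moreover have "G c = 0" by (simp add: G_def)
  ultimately show ?thesis by blast
qed

definition Sf :: "(nat \<Rightarrow> int) \<Rightarrow> nat \<Rightarrow> real \<Rightarrow> real" where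
  "Sf a m u = (\<Sum>j=1..m. of_int (a j) / (of_int (a j) * u + 1))"
definition Rf :: "(nat \<Rightarrow> int) \<Rightarrow> nat \<Rightarrow> real \<Rightarrow> real" where
  "Rf a m u = (\<Sum>j=1..m. (of_int (a j))^2 / (of_int (a j) * u + 1))"
definition Sd :: "(nat \<Rightarrow> int) \<Rightarrow> nat \<Rightarrow> real \<Rightarrow> real" where
  "Sd a m u = - (\<Sum>j=1..m. (of_int (a j))^2 / (of_int (a j) * u + 1)^2)"
definition inD :: "(nat \<Rightarrow> int) \<Rightarrow> nat \<Rightarrow> real \<Rightarrow> bool" where
  "inD a m u \<longleftrightarrow> (\<forall>j\<in>{1..m}. of_int (a j) * u + 1 > 0)"

lemma Q_pos: "inD a m u \<Longrightarrow> Qpoly a m u > 0"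
  unfolding inD_def Qpoly_def by (rule prod_pos) auto

lemma Q_0: "Qpoly a m 0 = 1" by (simp add: Qpoly_def)

lemma inD_0: "inD a m 0" by (simp add: inD_def)

lemma Q_cont: "continuous_on S (Qpoly a m)"
  unfolding Qpoly_def by (intro continuous_intros)

lemma Q_deriv:
  assumes "inD a m u"
  shows "(Qpoly a m has_real_derivative Qpoly a m u * Sf a m u) (at u)"
proof -
  have "((\<lambda>u. \<Prod>j\<in>{1..m}. of_int (a j) * u + 1) has_real_derivative
         (\<Prod>j\<in>{1..m}. of_int (a j) * u + 1) * (\<Sum>j\<in>{1..m}. of_int (a j) / (of_int (a j) * u + 1))) (at u)"
  proof (intro has_field_derivative_prod'[where f="\<lambda>j u. of_int (a j) * u + 1", simplified])
    fix j assume "j \<in> {1..m}"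
    then have "of_int (a j) * u + 1 > (0::real)" using assms by (simp add: inD_def)
    then show "of_int (a j) * u + 1 \<noteq> (0::real)" by simp
    show "((\<lambda>u. of_int (a j) * u + 1) has_real_derivative of_int (a j)) (at u)"
      by (auto intro!: derivative_eq_intros)
  qed
  then show ?thesis unfolding Qpoly_def Sf_def by (simp add: fun_eq_iff)
qed

lemma S_eq:
  assumes s0: "(\<Sum>j=1..m. a j) = 0" and d: "inD a m u"
  shows "Sf a m u = - u * Rf a m u"
proof -
  have "Sf a m u = (\<Sum>j=1..m. of_int (a j) - u * ((of_int (a j))^2 / (of_int (a j) * u + 1)))"
    unfolding Sf_def
  proof (rule sum.cong[OF refl])
    fix j assume "j \<in> {1..m}"
    then have "of_int (a j) * u + 1 > (0::real)" using d by (simp add: inD_def)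
    then show "of_int (a j) / (of_int (a j) * u + 1) = of_int (a j) - u * ((of_int (a j))^2 / (of_int (a j) * u + 1))"
      by (simp add: field_simps power2_eq_square)
  qed
  also have "\<dots> = (\<Sum>j=1..m. (of_int (a j)::real)) - u * Rf a m u"
    by (simp add: sum_subtractf sum_distrib_left Rf_def)
  also have "(\<Sum>j=1..m. (of_int (a j)::real)) = 0" using s0 by (metis of_int_0 of_int_sum)
  finally show ?thesis by simp
qed

lemma R_pos:
  assumes nz: "\<exists>j\<in>{1..m}. a j \<noteq> 0" and d: "inD a m u"
  shows "Rf a m u > 0"
proof -
  obtain j where j: "j \<in> {1..m}" "a j \<noteq> 0" using nz by blast
  show ?thesis unfolding Rf_def
  proof (rule sum_pos2[OF _ j(1)])
    show "0 < (of_int (a j))\<^sup>2 / (of_int (a j) * u + 1)"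
      using j d by (auto simp: inD_def)
    show "\<And>i. i \<in> {1..m} \<Longrightarrow> 0 \<le> (of_int (a i))\<^sup>2 / (of_int (a i) * u + (1::real))"
      using d by (auto simp: inD_def less_imp_le)
  qed simp
qed

lemma inD_convex:
  assumes "inD a m x" "inD a m y" "x \<le> z" "z \<le> y"
  shows "inD a m z"
  unfolding inD_def
proof
  fix j assume j: "j \<in> {1..m}"
  have "of_int (a j) * x + 1 > (0::real)" "of_int (a j) * y + 1 > (0::real)"
    using assms j by (auto simp: inD_def)
  moreover have "of_int (a j) * z \<ge> min (of_int (a j) * x) (of_int (a j) * (y::real))"
  proof (cases "a j \<ge> 0")
    case True then show ?thesis using assms(3) by (simp add: mult_left_mono min.coboundedI1)
  next
    case False then show ?thesis using assms(4) by (simp add: mult_left_mono_neg min.coboundedI2)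
  qed
  ultimately show "of_int (a j) * z + 1 > 0" by linarith
qed

lemma S_cont: "(\<And>x. x \<in> S \<Longrightarrow> inD a m x) \<Longrightarrow> continuous_on S (Sf a m)"
  unfolding Sf_def inD_def
  by (intro continuous_intros) (fastforce dest!: bspec)

lemma R_cont: "(\<And>x. x \<in> S \<Longrightarrow> inD a m x) \<Longrightarrow> continuous_on S (Rf a m)"
  unfolding Rf_def inD_def
  by (intro continuous_intros) (fastforce dest!: bspec)

lemma Sd_cont: "(\<And>x. x \<in> S \<Longrightarrow> inD a m x) \<Longrightarrow> continuous_on S (Sd a m)"
  unfolding Sd_def inD_def
  by (intro continuous_intros) (fastforce dest!: bspec)

lemma S_deriv:
  assumes "inD a m u"
  shows "(Sf a m has_real_derivative Sd a m u) (at u)"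
proof -
  have "((\<lambda>u. \<Sum>j=1..m. of_int (a j) / (of_int (a j) * u + 1)) has_real_derivative
      (\<Sum>j=1..m. -(((of_int (a j))^2) / ((of_int (a j) * u + 1)^2)))) (at u)"
  proof (rule DERIV_sum)
    fix j assume j: "j \<in> {1..m}"
    then have "of_int (a j) * u + 1 > (0::real)" using assms by (simp add: inD_def)
    then have ne: "of_int (a j) * u + 1 \<noteq> (0::real)" by simp
    show "((\<lambda>u. of_int (a j) / (of_int (a j) * u + 1)) has_real_derivative
        -(((of_int (a j))^2) / ((of_int (a j) * u + 1)^2))) (at u)"
      using ne by (auto intro!: derivative_eq_intros simp: power2_eq_square field_simps)
  qed
  then show ?thesis unfolding Sf_def Sd_def by (simp add: sum_negf fun_eq_iff)
qed

locale QS =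
  fixes a :: "nat \<Rightarrow> int" and m :: nat
  assumes m1: "m \<ge> 1"
    and sorted: "\<And>i j. 1 \<le> i \<Longrightarrow> i \<le> j \<Longrightarrow> j \<le> m \<Longrightarrow> a i \<le> a j"
    and nonzero: "\<exists>j\<in>{1..m}. a j \<noteq> 0"
    and sum0: "(\<Sum>j=1..m. a j) = 0"
begin

abbreviation "Q \<equiv> Qpoly a m"
abbreviation "D \<equiv> inD a m"

lemma am_pos: "a m > 0"
proof (rule ccontr)
  assume "\<not> a m > 0"
  then have le: "\<forall>j\<in>{1..m}. a j \<le> 0"
  proof (intro ballI)
    fix j assume "j \<in> {1..m}" "\<not> a m > 0"
    then have "a j \<le> a m" using sorted[of j m] by simp
    then show "a j \<le> 0" using \<open>\<not> a m > 0\<close> by simp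
  qed
  have "(\<Sum>j=1..m. - a j) = 0" using sum0 by (simp add: sum_negf)
  then have "\<forall>j\<in>{1..m}. - a j = 0" using le by (subst (asm) sum_nonneg_eq_0_iff) auto
  then show False using nonzero by auto
qed

lemma a1_neg: "a 1 < 0"
proof (rule ccontr)
  assume "\<not> a 1 < 0"
  then have le: "\<forall>j\<in>{1..m}. a j \<ge> 0"
  proof (intro ballI)
    fix j assume "j \<in> {1..m}" "\<not> a 1 < 0"
    then have "a 1 \<le> a j" using sorted[of 1 j] by simp
    then show "a j \<ge> 0" using \<open>\<not> a 1 < 0\<close> by simp
  qed
  then have "\<forall>j\<in>{1..m}. a j = 0" using sum0 by (subst (asm) sum_nonneg_eq_0_iff) auto
  then show False using nonzero by auto
qed

lemma inD_left:
  assumes "-1 / of_int (a m) < u" "u \<le> 0"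
  shows "D u"
  unfolding inD_def
proof
  fix j assume j: "j \<in> {1..m}"
  have amp: "(of_int (a m)::real) > 0" using am_pos by simp
  have "a j \<le> a m" using j sorted by auto
  then have "of_int (a j) * u \<ge> of_int (a m) * u" using assms(2)
    by (simp add: mult_right_mono_neg)
  moreover have "of_int (a m) * u > -1" using assms(1) amp by (simp add: field_simps)
  ultimately show "of_int (a j) * u + 1 > 0" by linarith
qed

lemma inD_right:
  assumes "u < -1 / of_int (a 1)" "0 \<le> u"
  shows "D u"
  unfolding inD_def
proof
  fix j assume j: "j \<in> {1..m}"
  have amp: "(of_int (a 1)::real) < 0" using a1_neg by simp
  have "a 1 \<le> a j" using j sorted by auto
  then have "of_int (a j) * u \<ge> of_int (a 1) * u" using assms(2)
    by (simp add: mult_right_mono)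
  moreover have "of_int (a 1) * u > -1" using assms(1) amp by (simp add: field_simps)
  ultimately show "of_int (a j) * u + 1 > 0" by linarith
qed

lemma Q_left_zero: "Q (-1 / of_int (a m)) = 0"
  unfolding Qpoly_def using am_pos m1
  by (intro prod_zero) (auto intro!: bexI[of _ m])

lemma Q_right_zero: "Q (-1 / of_int (a 1)) = 0"
  unfolding Qpoly_def using a1_neg m1
  by (intro prod_zero) (auto intro!: bexI[of _ 1])

lemma inD_bounds:
  assumes "D u" shows "-1 / of_int (a m) < u" "u < -1 / of_int (a 1)"
proof -
  have "of_int (a m) * u + 1 > (0::real)" "of_int (a 1) * u + 1 > (0::real)"
    using assms m1 by (auto simp: inD_def)
  moreover have "(of_int (a m)::real) > 0" "(of_int (a 1)::real) < 0" using am_pos a1_neg by auto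
  ultimately show "-1 / of_int (a m) < u" "u < -1 / of_int (a 1)"
    by (simp_all add: field_simps)
qed

lemma S_pos: "D u \<Longrightarrow> u < 0 \<Longrightarrow> Sf a m u > 0"
  using S_eq[OF sum0] R_pos[OF nonzero] by (simp add: mult_neg_pos)

lemma S_neg: "D u \<Longrightarrow> u > 0 \<Longrightarrow> Sf a m u < 0"
  using S_eq[OF sum0] R_pos[OF nonzero] by (simp add: mult_pos_pos)

lemma Q_incr:
  assumes "D x" "x < y" "y \<le> 0"
  shows "Q x < Q y"
proof (rule DERIV_pos_imp_increasing_open[OF assms(2)])
  fix z assume z: "x < z" "z < y"
  then have "D z" using inD_convex[OF assms(1) inD_0, of z] assms by auto
  then show "\<exists>l. (Q has_real_derivative l) (at z) \<and> 0 < l"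
    using Q_deriv Q_pos S_pos z assms by (intro exI conjI) (auto intro!: mult_pos_pos)
qed (rule Q_cont)

lemma Q_decr:
  assumes "D y" "x < y" "0 \<le> x"
  shows "Q y < Q x"
proof -
  have "(\<lambda>z. - Q z) x < (\<lambda>z. - Q z) y"
  proof (rule DERIV_pos_imp_increasing_open[OF assms(2)])
    fix z assume z: "x < z" "z < y"
    then have "D z" using inD_convex[OF inD_0 assms(1), of z] assms by auto
    then show "\<exists>l. ((\<lambda>z. - Q z) has_real_derivative l) (at z) \<and> 0 < l"
      using Q_deriv[THEN DERIV_minus] Q_pos S_neg z assms
      by (intro exI conjI) (auto intro!: mult_pos_neg)
  qed (intro continuous_intros Q_cont)
  then show ?thesis by simp
qed

lemma roots:
  fixes A u0 :: real
  assumes A: "0 < A" "A < 1" and u0: "D u0" "Q u0 \<ge> A^2"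
  shows "\<exists>u1 u2. D u1 \<and> D u2 \<and> u1 < 0 \<and> 0 < u2 \<and> u1 \<le> u0 \<and> u0 \<le> u2 \<and>
     Q u1 = A^2 \<and> Q u2 = A^2 \<and> (\<forall>x. u1 < x \<and> x < u2 \<longrightarrow> Q x > A^2) \<and>
     (\<forall>x. u1 \<le> x \<and> x \<le> u2 \<longrightarrow> D x)"
proof -
  have A2: "A^2 < 1" "A^2 > 0" using A by (auto simp: power_less_one_iff)
  define l where "l = -1 / (of_int (a m)::real)"
  define b where "b = min u0 0"
  have lb: "l \<le> b" using inD_bounds(1)[OF u0(1)] am_pos unfolding l_def b_def by auto
  have Qb: "A^2 \<le> Q b"
  proof (cases "u0 \<le> 0")
    case True then have "b = u0" by (simp add: b_def)
    then show ?thesis using u0(2) by simp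
  next
    case False then have "b = 0" by (simp add: b_def)
    then show ?thesis using A2 by (simp add: Q_0)
  qed
  have "Q l \<le> A^2" using Q_left_zero A2 by (simp add: l_def)
  from IVT'[of Q l "A^2" b, OF this Qb lb Q_cont]
  obtain u1 where u1: "l \<le> u1" "u1 \<le> b" "Q u1 = A^2" by blast
  have "u1 \<noteq> l" using u1 Q_left_zero A2 by (auto simp: l_def)
  then have Du1: "D u1" using u1 by (intro inD_left) (auto simp: l_def b_def)
  have "u1 \<noteq> 0" using u1 A2 Q_0 by auto
  then have u1n: "u1 < 0" "u1 \<le> u0" using u1 by (auto simp: b_def)
  define l' where "l' = -1 / (of_int (a 1)::real)"
  define b' where "b' = max u0 0"
  have lb': "b' \<le> l'" using inD_bounds(2)[OF u0(1)] a1_neg unfolding l'_def b'_def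
    by (auto simp: field_simps)
  have Qb': "A^2 \<le> Q b'"
  proof (cases "u0 \<ge> 0")
    case True then have "b' = u0" by (simp add: b'_def)
    then show ?thesis using u0(2) by simp
  next
    case False then have "b' = 0" by (simp add: b'_def)
    then show ?thesis using A2 by (simp add: Q_0)
  qed
  have "Q l' \<le> A^2" using Q_right_zero A2 by (simp add: l'_def)
  from IVT2'[of Q l' "A^2" b', OF this Qb' lb' Q_cont]
  obtain u2 where u2: "b' \<le> u2" "u2 \<le> l'" "Q u2 = A^2" by blast
  have "u2 \<noteq> l'" using u2 Q_right_zero A2 by (auto simp: l'_def)
  then have Du2: "D u2" using u2 by (intro inD_right) (auto simp: l'_def b'_def)
  have "u2 \<noteq> 0" using u2 A2 Q_0 by auto
  then have u2n: "u2 > 0" "u0 \<le> u2" using u2 by (auto simp: b'_def)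
  have between: "\<forall>x. u1 \<le> x \<and> x \<le> u2 \<longrightarrow> D x" using inD_convex[OF Du1 Du2] by blast
  have "\<forall>x. u1 < x \<and> x < u2 \<longrightarrow> Q x > A^2"
  proof (intro allI impI)
    fix x assume x: "u1 < x \<and> x < u2"
    show "Q x > A^2"
    proof (cases "x \<le> 0")
      case True then show ?thesis using Q_incr[OF Du1, of x] x u1(3) by simp
    next
      case False then show ?thesis using Q_decr[OF Du2, of x] x u2(3) by simp
    qed
  qed
  then show ?thesis using Du1 Du2 u1n u2n u1(3) u2(3) between
    by (intro exI[of _ u1] exI[of _ u2]) simp
qed

end

context QS begin

lemma Q_poly: "Q x = poly (\<Prod>j\<in>{1..m}. [:1, of_int (a j):]) x"
  by (simp add: Qpoly_def poly_prod add.commute mult.commute)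

lemma factor:
  fixes A u1 u2 :: real
  assumes ne: "u1 \<noteq> u2" and q1: "Q u1 = A^2" and q2: "Q u2 = A^2"
  shows "\<exists>g g'. (\<forall>x. Q x = A^2 + (x - u1) * (u2 - x) * g x) \<and> (\<forall>x. (g has_real_derivative g' x) (at x))"
proof -
  define P :: "real poly" where "P = (\<Prod>j\<in>{1..m}. [:1, of_int (a j):])"
  define p where "p = P - [:A^2:]"
  have pe: "poly p x = Q x - A^2" for x by (simp add: p_def P_def Q_poly)
  have "poly p u1 = 0" using pe q1 by simp
  then obtain q where q: "p = [:-u1, 1:] * q" by (auto simp: poly_eq_0_iff_dvd elim!: dvdE)
  have "poly p u2 = 0" using pe q2 by simp
  then have "(u2 - u1) * poly q u2 = 0" by (auto simp: q)
  then have "poly q u2 = 0" using ne by auto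
  then obtain w where w: "q = [:-u2, 1:] * w" by (auto simp: poly_eq_0_iff_dvd elim!: dvdE)
  define g where "g = (\<lambda>x. - poly w x)"
  define g' where "g' = (\<lambda>x. - poly (pderiv w) x)"
  have "\<forall>x. Q x = A^2 + (x - u1) * (u2 - x) * g x"
    unfolding g_def
  proof
    fix x
    have "Q x = poly p x + A^2" using pe by simp
    also have "poly p x = (x - u1) * ((x - u2) * poly w x)" by (simp add: q w algebra_simps)
    finally show "Q x = A^2 + (x - u1) * (u2 - x) * (- poly w x)" by (simp add: algebra_simps)
  qed
  moreover have "\<forall>x. (g has_real_derivative g' x) (at x)"
    unfolding g_def g'_def by (auto intro!: derivative_eq_intros)
  ultimately show ?thesis by blast
qed

lemma Qd_alt:
  fixes A u1 u2 :: real and g g' :: "real \<Rightarrow> real"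
  assumes gQ: "\<forall>x. Q x = A^2 + (x - u1) * (u2 - x) * g x"
    and gd: "\<forall>x. (g has_real_derivative g' x) (at x)"
    and x: "D x"
  shows "Q x * Sf a m x = (u1 + u2 - 2 * x) * g x + (x - u1) * (u2 - x) * g' x"
proof -
  have e: "Q = (\<lambda>x. A^2 + (x - u1) * (u2 - x) * g x)" using gQ by auto
  have "((\<lambda>x. A^2 + (x - u1) * (u2 - x) * g x) has_real_derivative
          (u1 + u2 - 2 * x) * g x + (x - u1) * (u2 - x) * g' x) (at x)"
    using gd by (auto intro!: derivative_eq_intros simp: algebra_simps)
  then have "(Q has_real_derivative (u1 + u2 - 2 * x) * g x + (x - u1) * (u2 - x) * g' x) (at x)"
    using e by simp
  from DERIV_unique[OF Q_deriv[OF x] this] show ?thesis .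
qed

lemma g_pos:
  fixes A u1 u2 :: real and g g' :: "real \<Rightarrow> real"
  assumes gQ: "\<forall>x. Q x = A^2 + (x - u1) * (u2 - x) * g x"
    and gd: "\<forall>x. (g has_real_derivative g' x) (at x)"
    and Du1: "D u1" and Du2: "D u2" and u1: "u1 < 0" and u2: "0 < u2"
    and Qu1: "Q u1 = A^2" and Qu2: "Q u2 = A^2" and A: "A > 0"
    and between: "\<forall>x. u1 < x \<and> x < u2 \<longrightarrow> Q x > A^2"
    and x: "u1 \<le> x" "x \<le> u2"
  shows "g x > 0"
proof -
  consider "x = u1" | "x = u2" | "u1 < x \<and> x < u2" using x by linarith
  then show ?thesis
  proof cases
    case 1
    have "Q u1 * Sf a m u1 = (u2 - u1) * g u1"
      using Qd_alt[OF gQ gd Du1] by (simp add: algebra_simps)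
    moreover have "Q u1 * Sf a m u1 > 0" using Q_pos[OF Du1] S_pos[OF Du1 u1] by simp
    ultimately show ?thesis using 1 u1 u2 by (simp add: zero_less_mult_iff)
  next
    case 2
    have "Q u2 * Sf a m u2 = - ((u2 - u1) * g u2)"
      using Qd_alt[OF gQ gd Du2] by (simp add: algebra_simps)
    moreover have "Q u2 * Sf a m u2 < 0" using Q_pos[OF Du2] S_neg[OF Du2 u2] by (simp add: mult_pos_neg)
    ultimately show ?thesis using 2 u1 u2 by (simp add: zero_less_mult_iff)
  next
    case 3
    then have "(x - u1) * (u2 - x) * g x > 0" using between gQ by force
    moreover have "(x - u1) * (u2 - x) > 0" using 3 by simp
    ultimately show ?thesis by (simp add: zero_less_mult_iff)
  qed
qed

end

lemma arctan_facts:
  fixes A X Qv :: real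
  assumes A: "A > 0" and q: "Qv = A^2 + X^2"
  shows "cos (arctan (X / A)) = A / sqrt Qv" "sin (arctan (X / A)) = X / sqrt Qv"
proof -
  have "1 + (X / A)^2 = Qv / A^2" using A q by (simp add: field_simps)
  then have s: "sqrt (1 + (X / A)^2) = sqrt Qv / A" using A by (simp add: real_sqrt_divide)
  have Qp: "sqrt Qv > 0" using q A by (simp add: add_pos_nonneg)
  show "cos (arctan (X / A)) = A / sqrt Qv" unfolding cos_arctan s using A Qp by simp
  show "sin (arctan (X / A)) = X / sqrt Qv" unfolding sin_arctan s using A Qp by simp
qed

locale Sol = QS +
  fixes A u1 u2 :: real and g g' :: "real \<Rightarrow> real" and \<phi>0 :: real
  assumes A: "A > 0"
    and u12: "u1 < u2"
    and gQ: "\<forall>x. Q x = A^2 + (x - u1) * (u2 - x) * g x"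
    and gd: "\<forall>x. (g has_real_derivative g' x) (at x)"
    and gpos: "\<And>x. u1 \<le> x \<Longrightarrow> x \<le> u2 \<Longrightarrow> g x > 0"
    and Dbetween: "\<And>x. u1 \<le> x \<Longrightarrow> x \<le> u2 \<Longrightarrow> D x"
begin

definition "cc = (u1 + u2) / 2"
definition "rr = (u2 - u1) / 2"
definition "hh x = 2 * sqrt (g (cc + rr * cos x))"

lemma rr_pos: "rr > 0" using u12 by (simp add: rr_def)

lemma range: "u1 \<le> cc + rr * cos x" "cc + rr * cos x \<le> u2"
proof -
  have "-1 \<le> cos x" "cos x \<le> 1" by auto
  then have "rr * -1 \<le> rr * cos x" "rr * cos x \<le> rr * 1"
    using rr_pos by (intro mult_left_mono; simp)+
  moreover have "cc - rr = u1" "cc + rr = u2" by (simp_all add: cc_def rr_def field_simps)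
  ultimately show "u1 \<le> cc + rr * cos x" "cc + rr * cos x \<le> u2" by linarith+
qed

lemma hh_pos: "hh x > 0" using gpos[OF range] by (simp add: hh_def)

lemma g_cont: "continuous_on UNIV g"
  using gd by (intro continuous_at_imp_continuous_on ballI DERIV_isCont) auto

lemma inv_hh_cont: "continuous_on UNIV (\<lambda>x. 1 / hh x)"
proof -
  have "continuous_on UNIV (\<lambda>x. g (cc + rr * cos x))"
    by (rule continuous_on_compose2[OF g_cont]) (auto intro!: continuous_intros)
  moreover have gn: "g (cc + rr * cos x) \<noteq> 0" for x using gpos[OF range] by (metis less_irrefl)
  ultimately show ?thesis unfolding hh_def
    by (intro continuous_intros) (simp_all add: gn)
qed

definition "FF = (SOME F. F \<phi>0 = 0 \<and> (\<forall>x. (F has_real_derivative 1 / hh x) (at x)))"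

lemma FF: "FF \<phi>0 = 0" "\<And>x. (FF has_real_derivative 1 / hh x) (at x)"
proof -
  have "\<exists>F. F \<phi>0 = 0 \<and> (\<forall>x. (F has_real_derivative 1 / hh x) (at x))"
    by (rule antideriv_exists[OF inv_hh_cont])
  from someI_ex[OF this] show "FF \<phi>0 = 0" "\<And>x. (FF has_real_derivative 1 / hh x) (at x)"
    unfolding FF_def by blast+
qed

lemma FF_cont: "continuous_on S FF"
  by (intro continuous_at_imp_continuous_on ballI DERIV_isCont[OF FF(2)])

lemma FF_mono: assumes "x < y" shows "FF x < FF y"
proof (rule DERIV_pos_imp_increasing[OF assms])
  fix z show "\<exists>y. (FF has_real_derivative y) (at z) \<and> 0 < y"
    by (intro exI[of _ "1 / hh z"] conjI FF(2)) (simp add: hh_pos)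
qed

definition "TT = FF (\<phi>0 + 2 * pi)"

lemma TT_pos: "TT > 0" using FF_mono[of \<phi>0 "\<phi>0 + 2 * pi"] FF(1) by (simp add: TT_def)

lemma hh_per: "hh (x + 2 * pi) = hh x" by (simp add: hh_def)

lemma FF_per: "FF (x + 2 * pi) = FF x + TT"
proof -
  have "\<forall>x. ((\<lambda>x. FF (x + 2 * pi) - FF x) has_real_derivative 0) (at x)"
  proof
    fix x
    have d1: "((\<lambda>x. x + 2 * pi) has_real_derivative 1) (at x)" by (auto intro!: derivative_eq_intros)
    have "((\<lambda>x. FF (x + 2 * pi)) has_real_derivative (1 / hh (x + 2 * pi)) * 1) (at x)"
      by (rule DERIV_chain2[OF FF(2) d1])
    from DERIV_diff[OF this FF(2)]
    have "((\<lambda>x. FF (x + 2 * pi) - FF x) has_real_derivative (1 / hh (x + 2 * pi)) * 1 - 1 / hh x) (at x)" .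
    then show "((\<lambda>x. FF (x + 2 * pi) - FF x) has_real_derivative 0) (at x)" by (simp add: hh_per)
  qed
  from DERIV_isconst_all[OF this, of x \<phi>0] show ?thesis by (simp add: FF(1) TT_def)
qed

lemma FF_nat: "FF (x + 2 * pi * real n) = FF x + real n * TT"
proof (induction n)
  case (Suc n)
  have "FF (x + 2 * pi * real (Suc n)) = FF ((x + 2 * pi * real n) + 2 * pi)" by (simp add: algebra_simps)
  also have "\<dots> = FF (x + 2 * pi * real n) + TT" by (rule FF_per)
  also have "\<dots> = FF x + real n * TT + TT" using Suc by simp
  finally show ?case by (simp add: algebra_simps)
qed simp

lemma FF_nat': "FF (x - 2 * pi * real n) = FF x - real n * TT"
  using FF_nat[of "x - 2 * pi * real n" n] by simp

lemma FF_surj: "\<exists>x. FF x = t"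
proof -
  obtain n where n: "\<bar>t\<bar> < real n * TT" using reals_Archimedean3[OF TT_pos] by blast
  have "FF (\<phi>0 - 2 * pi * real n) \<le> t" using n FF_nat'[of \<phi>0 n] FF(1) by simp
  moreover have "t \<le> FF (\<phi>0 + 2 * pi * real n)" using n FF_nat[of \<phi>0 n] FF(1) by simp
  moreover have "\<phi>0 - 2 * pi * real n \<le> \<phi>0 + 2 * pi * real n" by simp
  ultimately obtain x where "FF x = t"
    using IVT'[of FF "\<phi>0 - 2 * pi * real n" t "\<phi>0 + 2 * pi * real n", OF _ _ _ FF_cont] by blast
  then show ?thesis ..
qed

lemma FF_inj: assumes "FF x = FF y" shows "x = y"
proof (rule ccontr)
  assume "x \<noteq> y"
  then have "x < y \<or> y < x" by linarith
  then show False using FF_mono[of x y] FF_mono[of y x] assms by auto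
qed

definition "ph t = (THE x. FF x = t)"

lemma FF_ph: "FF (ph t) = t"
proof -
  obtain x where x: "FF x = t" using FF_surj by blast
  have "\<exists>!x. FF x = t"
  proof (rule ex1I[of _ x])
    show "FF x = t" by (rule x)
    show "\<And>y. FF y = t \<Longrightarrow> y = x" using x FF_inj by simp
  qed
  from theI'[OF this] show ?thesis unfolding ph_def .
qed

lemma ph_FF: "ph (FF x) = x"
  by (rule FF_inj) (rule FF_ph)

lemma ph_0: "ph 0 = \<phi>0" using ph_FF[of \<phi>0] FF(1) by simp

lemma ph_shift: "ph (t + TT) = ph t + 2 * pi"
proof -
  have "FF (ph t + 2 * pi) = t + TT" by (simp add: FF_per FF_ph)
  then have "ph (t + TT) = ph (FF (ph t + 2 * pi))" by simp
  also have "\<dots> = ph t + 2 * pi" by (rule ph_FF)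
  finally show ?thesis .
qed

lemma ph_deriv: "(ph has_real_derivative hh (ph t)) (at t)"
proof -
  have cont: "isCont ph t"
  proof -
    have "isCont ph (FF (ph t))"
      by (rule isCont_inverse_function[where d=1]) (simp_all add: ph_FF DERIV_isCont[OF FF(2)])
    then show ?thesis by (simp add: FF_ph)
  qed
  have "(ph has_real_derivative inverse (1 / hh (ph t))) (at t)"
    by (rule DERIV_inverse_function[where a="t - 1" and b="t + 1" and f=FF, OF FF(2) _ _ _ _ cont])
       (use hh_pos[of "ph t"] in \<open>auto simp: FF_ph\<close>)
  then show ?thesis by simp
qed

end

context Sol begin

definition "uu t = cc + rr * cos (ph t)"
definition "XX t = - rr * sin (ph t) * sqrt (g (uu t))"

lemma uu_range: "u1 \<le> uu t" "uu t \<le> u2" unfolding uu_def by (rule range)+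

lemma uu_D: "D (uu t)" using Dbetween[OF uu_range] .

lemma g_uu: "g (uu t) > 0" using gpos[OF uu_range] .

lemma hh_ph: "hh (ph t) = 2 * sqrt (g (uu t))" by (simp add: hh_def uu_def)

lemma d_ph: "(ph has_real_derivative 2 * sqrt (g (uu t))) (at t)"
  using ph_deriv[of t] by (simp add: hh_ph)

lemma uu_deriv: "(uu has_real_derivative 2 * XX t) (at t)"
proof -
  have "((\<lambda>t. cos (ph t)) has_real_derivative - sin (ph t) * (2 * sqrt (g (uu t)))) (at t)"
    by (rule DERIV_chain2[OF DERIV_cos d_ph])
  from DERIV_add[OF DERIV_const DERIV_cmult[OF this, of rr], of cc]
  have "((\<lambda>t. cc + rr * cos (ph t)) has_real_derivative 0 + rr * (- sin (ph t) * (2 * sqrt (g (uu t))))) (at t)" .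
  then show ?thesis unfolding uu_def[abs_def] XX_def by (simp add: algebra_simps uu_def)
qed

lemma uu_cont: "continuous_on S uu"
  by (intro continuous_at_imp_continuous_on ballI DERIV_isCont[OF uu_deriv])

lemma prod_id: "(uu t - u1) * (u2 - uu t) = rr^2 * (sin (ph t))^2"
proof -
  have h1: "uu t - u1 = rr + rr * cos (ph t)" by (simp add: uu_def cc_def rr_def field_simps)
  have h2: "u2 - uu t = rr - rr * cos (ph t)" by (simp add: uu_def cc_def rr_def field_simps)
  have "(uu t - u1) * (u2 - uu t) = (rr + rr * cos (ph t)) * (rr - rr * cos (ph t))"
    unfolding h1 h2 ..
  also have "\<dots> = rr^2 * (1 - (cos (ph t))^2)" by (simp add: algebra_simps power2_eq_square)
  finally show ?thesis by (simp add: sin_squared_eq)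
qed

lemma XX_sq: "Q (uu t) = A^2 + (XX t)^2"
proof -
  have "(XX t)^2 = rr^2 * (sin (ph t))^2 * g (uu t)"
    using g_uu[of t] by (simp add: XX_def power_mult_distrib)
  then show ?thesis using gQ prod_id[of t] by simp
qed

lemma XX_deriv: "(XX has_real_derivative Q (uu t) * Sf a m (uu t)) (at t)"
proof -
  define p where "p = ph t"
  define s where "s = sqrt (g (uu t))"
  have s0: "s > 0" using g_uu[of t] by (simp add: s_def)
  have ss: "s * s = g (uu t)" using g_uu[of t] by (simp add: s_def)
  have dsin: "((\<lambda>t. sin (ph t)) has_real_derivative cos (ph t) * (2 * sqrt (g (uu t)))) (at t)"
    by (rule DERIV_chain2[OF DERIV_sin d_ph])
  have dg: "((\<lambda>t. g (uu t)) has_real_derivative g' (uu t) * (2 * XX t)) (at t)"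
    by (rule DERIV_chain2[OF gd[rule_format] uu_deriv])
  have dsq: "((\<lambda>t. sqrt (g (uu t))) has_real_derivative inverse (sqrt (g (uu t))) / 2 * (g' (uu t) * (2 * XX t))) (at t)"
    by (rule DERIV_chain2[OF DERIV_real_sqrt[OF g_uu] dg])
  from DERIV_mult[OF DERIV_cmult[OF dsin, of "- rr"] dsq]
  have "(XX has_real_derivative - rr * (cos (ph t) * (2 * sqrt (g (uu t)))) * sqrt (g (uu t)) +
       inverse (sqrt (g (uu t))) / 2 * (g' (uu t) * (2 * XX t)) * (- rr * sin (ph t))) (at t)"
    unfolding XX_def[abs_def] by simp
  moreover have "- rr * (cos (ph t) * (2 * sqrt (g (uu t)))) * sqrt (g (uu t)) +
       inverse (sqrt (g (uu t))) / 2 * (g' (uu t) * (2 * XX t)) * (- rr * sin (ph t))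
     = (u1 + u2 - 2 * uu t) * g (uu t) + (uu t - u1) * (u2 - uu t) * g' (uu t)"
  proof -
    have e1: "u1 + u2 - 2 * uu t = - 2 * rr * cos p" by (simp add: uu_def cc_def p_def field_simps)
    have e2: "XX t = - rr * sin p * s" by (simp add: XX_def p_def s_def)
    show ?thesis unfolding prod_id e1 e2 p_def[symmetric] s_def[symmetric] ss[symmetric]
      using s0 by (simp add: field_simps power2_eq_square)
  qed
  ultimately show ?thesis using Qd_alt[OF gQ gd uu_D] by simp
qed

end

context Sol begin

definition "th \<theta>0 t = \<theta>0 + arctan (XX 0 / A) - arctan (XX t / A)"

lemma Qsqrt_pos: "sqrt (Q (uu t)) > 0" using Q_pos[OF uu_D] by simp

lemma arct: "cos (arctan (XX t / A)) = A / sqrt (Q (uu t))"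
  "sin (arctan (XX t / A)) = XX t / sqrt (Q (uu t))"
  using arctan_facts[OF A XX_sq] by auto

lemma th_props:
  assumes c0: "sqrt (Q (uu 0)) * cos \<theta>0 = XX 0" and s0: "sqrt (Q (uu 0)) * sin \<theta>0 = A"
  shows "sqrt (Q (uu t)) * sin (th \<theta>0 t) = A" "sqrt (Q (uu t)) * cos (th \<theta>0 t) = XX t"
proof -
  define z0 where "z0 = arctan (XX 0 / A)"
  define z where "z = arctan (XX t / A)"
  define \<beta> where "\<beta> = \<theta>0 - (pi / 2 - z0)"
  have q0: "sqrt (Q (uu 0)) > 0" by (rule Qsqrt_pos)
  have q: "sqrt (Q (uu t)) > 0" by (rule Qsqrt_pos)
  have c0': "cos \<theta>0 = XX 0 / sqrt (Q (uu 0))" using c0 q0 by (simp add: field_simps)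
  have s0': "sin \<theta>0 = A / sqrt (Q (uu 0))" using s0 q0 by (simp add: field_simps)
  have "cos \<beta> = cos \<theta>0 * sin z0 + sin \<theta>0 * cos z0"
    by (simp add: \<beta>_def cos_diff sin_diff)
  also have "\<dots> = (XX 0 ^ 2 + A ^ 2) / (sqrt (Q (uu 0)))^2"
    unfolding c0' s0' z0_def arct by (simp add: power2_eq_square add_divide_distrib)
  also have "\<dots> = 1" using XX_sq[of 0] Q_pos[OF uu_D, of 0] A by (simp add: add.commute)
  finally have cb: "cos \<beta> = 1" .
  then have sb: "sin \<beta> = 0" using sin_cos_squared_add[of \<beta>] by simp
  have tht: "th \<theta>0 t = \<beta> + (pi / 2 - z)" by (simp add: th_def \<beta>_def z0_def z_def)
  have "sin (th \<theta>0 t) = cos z" unfolding tht sin_add cb sb by (simp add: sin_diff)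
  then show "sqrt (Q (uu t)) * sin (th \<theta>0 t) = A" using q by (simp add: z_def arct)
  have "cos (th \<theta>0 t) = sin z" unfolding tht cos_add cb sb by (simp add: cos_diff)
  then show "sqrt (Q (uu t)) * cos (th \<theta>0 t) = XX t" using q by (simp add: z_def arct)
qed

lemma th_deriv: "(th \<theta>0 has_real_derivative - A * Sf a m (uu t)) (at t)"
proof -
  have d1: "((\<lambda>t. XX t / A) has_real_derivative Q (uu t) * Sf a m (uu t) / A) (at t)"
    by (rule DERIV_cdivide[OF XX_deriv])
  have d2: "((\<lambda>t. arctan (XX t / A)) has_real_derivative
      inverse (1 + (XX t / A)^2) * (Q (uu t) * Sf a m (uu t) / A)) (at t)"
    by (rule DERIV_chain2[OF DERIV_arctan d1])
  have d3: "(th \<theta>0 has_real_derivative 0 - inverse (1 + (XX t / A)^2) * (Q (uu t) * Sf a m (uu t) / A)) (at t)"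
    unfolding th_def[abs_def] by (rule DERIV_diff[OF DERIV_const d2])
  have "1 + (XX t / A)^2 = Q (uu t) / A^2" using XX_sq[of t] A by (simp add: field_simps)
  then have "inverse (1 + (XX t / A)^2) * (Q (uu t) * Sf a m (uu t) / A) = A * Sf a m (uu t)"
    using A Q_pos[OF uu_D, of t] by (simp add: field_simps power2_eq_square)
  then show ?thesis using d3 by simp
qed

lemma Ru_cont: "continuous_on UNIV (\<lambda>t. - A * Rf a m (uu t))"
proof -
  have "continuous_on UNIV (\<lambda>t. Rf a m (uu t))"
    by (rule continuous_on_compose2[OF R_cont[of "{u1..u2}"] uu_cont])
       (auto intro: Dbetween uu_range)
  then show ?thesis by (intro continuous_intros)
qed

definition "Gp = (SOME G. G 0 = 0 \<and> (\<forall>t. (G has_real_derivative - A * Rf a m (uu t)) (at t)))"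

lemma Gp: "Gp 0 = 0" "\<And>t. (Gp has_real_derivative - A * Rf a m (uu t)) (at t)"
proof -
  have "\<exists>G. G 0 = 0 \<and> (\<forall>t. (G has_real_derivative - A * Rf a m (uu t)) (at t))"
    by (rule antideriv_exists[OF Ru_cont])
  from someI_ex[OF this] show "Gp 0 = 0" "\<And>t. (Gp has_real_derivative - A * Rf a m (uu t)) (at t)"
    unfolding Gp_def by blast+
qed

lemma uu_per: "uu (t + TT) = uu t" by (simp add: uu_def ph_shift)
lemma XX_per: "XX (t + TT) = XX t" by (simp add: XX_def ph_shift uu_per)
lemma th_per: "th \<theta>0 (t + TT) = th \<theta>0 t" by (simp add: th_def XX_per)

lemma Gp_per: "Gp (t + TT) = Gp t + Gp TT"
proof -
  have "\<forall>x. ((\<lambda>x. Gp (x + TT) - Gp x) has_real_derivative 0) (at x)"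
  proof
    fix x
    have d1: "((\<lambda>x. x + TT) has_real_derivative 1) (at x)" by (auto intro!: derivative_eq_intros)
    have "((\<lambda>x. Gp (x + TT)) has_real_derivative (- A * Rf a m (uu (x + TT))) * 1) (at x)"
      by (rule DERIV_chain2[OF Gp(2) d1])
    from DERIV_diff[OF this Gp(2)]
    show "((\<lambda>x. Gp (x + TT) - Gp x) has_real_derivative 0) (at x)" by (simp add: uu_per)
  qed
  from DERIV_isconst_all[OF this, of t 0] show ?thesis by (simp add: Gp(1))
qed

lemma Gp_TT: "Gp TT < 0"
proof -
  have "Gp 0 > Gp TT"
  proof (rule DERIV_neg_imp_decreasing[OF TT_pos])
    fix x show "\<exists>y. (Gp has_real_derivative y) (at x) \<and> y < 0"
      by (intro exI[of _ "- A * Rf a m (uu x)"] conjI Gp(2))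
         (simp add: A R_pos[OF nonzero uu_D])
  qed
  then show ?thesis by (simp add: Gp(1))
qed

lemma uu_nonconst: "\<not> (\<exists>c. \<forall>t. uu t = c)"
proof
  assume "\<exists>c. \<forall>t. uu t = c"
  then have "uu (FF 0) = uu (FF pi)" by metis
  then have "cc + rr = cc - rr" by (simp add: uu_def ph_FF)
  then show False using rr_pos by simp
qed

lemma th_nonconst: "\<not> (\<exists>c. \<forall>t. th \<theta>0 t = c)"
proof
  assume "\<exists>c. \<forall>t. th \<theta>0 t = c"
  then have "th \<theta>0 (FF (pi/2)) = th \<theta>0 (FF (-(pi/2)))" by metis
  then have e: "arctan (XX (FF (pi/2)) / A) = arctan (XX (FF (-(pi/2))) / A)" by (simp add: th_def)
  have "XX (FF (pi/2)) < 0" using rr_pos g_uu by (simp add: XX_def ph_FF)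
  moreover have "XX (FF (-(pi/2))) > 0" using rr_pos g_uu by (simp add: XX_def ph_FF)
  ultimately have "XX (FF (pi/2)) / A < XX (FF (-(pi/2))) / A" using A by (simp add: divide_strict_right_mono)
  then have "arctan (XX (FF (pi/2)) / A) < arctan (XX (FF (-(pi/2))) / A)" by (simp add: arctan_less_iff)
  then show False using e by simp
qed

end

lemma gronwall_zero:
  fixes xa xb ya yb dxa dxb dya dyb :: "real \<Rightarrow> real" and L b :: real
  assumes dxa: "\<And>t. (xa has_real_derivative dxa t) (at t)"
    and dxb: "\<And>t. (xb has_real_derivative dxb t) (at t)"
    and dya: "\<And>t. (ya has_real_derivative dya t) (at t)"
    and dyb: "\<And>t. (yb has_real_derivative dyb t) (at t)"
    and L: "L \<ge> 0" and b: "b \<ge> 0"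
    and bd1: "\<And>t. 0 \<le> t \<Longrightarrow> t \<le> b \<Longrightarrow> \<bar>dxa t - dya t\<bar> \<le> L * (\<bar>xa t - ya t\<bar> + \<bar>xb t - yb t\<bar>)"
    and bd2: "\<And>t. 0 \<le> t \<Longrightarrow> t \<le> b \<Longrightarrow> \<bar>dxb t - dyb t\<bar> \<le> L * (\<bar>xa t - ya t\<bar> + \<bar>xb t - yb t\<bar>)"
    and i1: "xa 0 = ya 0" and i2: "xb 0 = yb 0"
  shows "xa b = ya b \<and> xb b = yb b"
proof -
  define z where "z t = ((xa t - ya t)^2 + (xb t - yb t)^2) * exp (- (4 * L) * t)" for t
  have dz: "(z has_real_derivative
      (2 * (xa t - ya t) * (dxa t - dya t) + 2 * (xb t - yb t) * (dxb t - dyb t)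
        - 4 * L * ((xa t - ya t)^2 + (xb t - yb t)^2)) * exp (- (4 * L) * t)) (at t)" for t
    unfolding z_def[abs_def]
    by (rule derivative_eq_intros dxa dxb dya dyb refl | simp)+ (simp add: algebra_simps)
  have "z b \<le> z 0"
  proof (rule DERIV_nonpos_imp_nonincreasing[OF b])
    fix t assume t: "0 \<le> t" "t \<le> b"
    define d1 where "d1 = xa t - ya t"
    define d2 where "d2 = xb t - yb t"
    define e1 where "e1 = dxa t - dya t"
    define e2 where "e2 = dxb t - dyb t"
    have b1: "\<bar>e1\<bar> \<le> L * (\<bar>d1\<bar> + \<bar>d2\<bar>)" using bd1[OF t] by (simp add: d1_def d2_def e1_def)
    have b2: "\<bar>e2\<bar> \<le> L * (\<bar>d1\<bar> + \<bar>d2\<bar>)" using bd2[OF t] by (simp add: d1_def d2_def e2_def)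
    have "d1 * e1 \<le> \<bar>d1\<bar> * \<bar>e1\<bar>" by (simp add: abs_mult[symmetric])
    also have "\<dots> \<le> \<bar>d1\<bar> * (L * (\<bar>d1\<bar> + \<bar>d2\<bar>))" using b1 by (simp add: mult_left_mono)
    finally have p1: "d1 * e1 \<le> \<bar>d1\<bar> * (L * (\<bar>d1\<bar> + \<bar>d2\<bar>))" .
    have "d2 * e2 \<le> \<bar>d2\<bar> * \<bar>e2\<bar>" by (simp add: abs_mult[symmetric])
    also have "\<dots> \<le> \<bar>d2\<bar> * (L * (\<bar>d1\<bar> + \<bar>d2\<bar>))" using b2 by (simp add: mult_left_mono)
    finally have p2: "d2 * e2 \<le> \<bar>d2\<bar> * (L * (\<bar>d1\<bar> + \<bar>d2\<bar>))" .
    have "(\<bar>d1\<bar> + \<bar>d2\<bar>)^2 \<le> 2 * (d1^2 + d2^2)"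
      using sum_squares_ge_zero[of "\<bar>d1\<bar> - \<bar>d2\<bar>" 0] by (simp add: power2_eq_square algebra_simps)
    then have "L * (\<bar>d1\<bar> + \<bar>d2\<bar>)^2 \<le> L * (2 * (d1^2 + d2^2))" using L by (rule mult_left_mono)
    then have "2 * d1 * e1 + 2 * d2 * e2 - 4 * L * (d1^2 + d2^2) \<le> 0"
      using p1 p2 by (simp add: power2_eq_square algebra_simps)
    then have "(2 * d1 * e1 + 2 * d2 * e2 - 4 * L * (d1^2 + d2^2)) * exp (- (4 * L) * t) \<le> 0"
      by (simp add: mult_nonpos_nonneg)
    then show "\<exists>y. (z has_real_derivative y) (at t) \<and> y \<le> 0"
      using dz[of t] unfolding d1_def d2_def e1_def e2_def by blast
  qed
  also have "z 0 = 0" by (simp add: z_def i1 i2)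
  finally have "(xa b - ya b)^2 + (xb b - yb b)^2 \<le> 0" by (simp add: z_def mult_le_0_iff)
  then show ?thesis using sum_power2_le_zero_iff[of "xa b - ya b" "xb b - yb b"] by simp
qed

lemma c1_lip:
  fixes P P' :: "real \<Rightarrow> real"
  assumes d: "\<And>x. x \<in> {p..q} \<Longrightarrow> (P has_real_derivative P' x) (at x)"
    and c: "continuous_on {p..q} P'"
  shows "\<exists>L\<ge>0. \<exists>M\<ge>0. (\<forall>x\<in>{p..q}. \<bar>P x\<bar> \<le> M) \<and>
           (\<forall>x\<in>{p..q}. \<forall>y\<in>{p..q}. \<bar>P x - P y\<bar> \<le> L * \<bar>x - y\<bar>)"
proof -
  have "bounded (P' ` {p..q})" by (intro compact_imp_bounded compact_continuous_image c compact_Icc)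
  then obtain B where B: "\<forall>x\<in>{p..q}. \<bar>P' x\<bar> \<le> B" by (auto simp: bounded_real)
  have cP: "continuous_on {p..q} P"
    using d by (intro continuous_at_imp_continuous_on ballI DERIV_isCont) auto
  have "bounded (P ` {p..q})" by (intro compact_imp_bounded compact_continuous_image cP compact_Icc)
  then obtain M where M: "\<forall>x\<in>{p..q}. \<bar>P x\<bar> \<le> M" by (auto simp: bounded_real)
  have lip: "\<forall>x\<in>{p..q}. \<forall>y\<in>{p..q}. \<bar>P x - P y\<bar> \<le> max B 0 * \<bar>x - y\<bar>"
  proof (intro ballI)
    fix x y assume xy: "x \<in> {p..q}" "y \<in> {p..q}"
    have "norm (P x - P y) \<le> max B 0 * norm (x - y)"
    proof (rule field_differentiable_bound[where S="{p..q}" and f'=P'])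
      show "convex {p..q}" by simp
      show "\<And>z. z \<in> {p..q} \<Longrightarrow> (P has_field_derivative P' z) (at z within {p..q})"
        using d by (rule has_field_derivative_at_within)
      show "\<And>z. z \<in> {p..q} \<Longrightarrow> norm (P' z) \<le> max B 0" using B by force
    qed (use xy in auto)
    then show "\<bar>P x - P y\<bar> \<le> max B 0 * \<bar>x - y\<bar>" by simp
  qed
  show ?thesis
    by (rule exI[of _ "max B 0"], simp, rule exI[of _ "max M 0"]) (use lip M in force)
qed

lemma cos_lip: "\<bar>cos x - cos y\<bar> \<le> \<bar>x - y\<bar>" for x y :: real
proof -
  have "\<bar>cos x - cos y\<bar> = 2 * \<bar>sin ((x + y) / 2)\<bar> * \<bar>sin ((y - x) / 2)\<bar>"
    by (simp add: cos_diff_cos abs_mult)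
  also have "\<dots> \<le> 2 * 1 * \<bar>(y - x) / 2\<bar>"
    by (intro mult_mono abs_sin_x_le_abs_x) auto
  finally show ?thesis by simp
qed

lemma sin_lip: "\<bar>sin x - sin y\<bar> \<le> \<bar>x - y\<bar>" for x y :: real
proof -
  have "\<bar>sin x - sin y\<bar> = 2 * \<bar>sin ((x - y) / 2)\<bar> * \<bar>cos ((x + y) / 2)\<bar>"
    by (simp add: sin_diff_sin abs_mult)
  also have "\<dots> \<le> 2 * \<bar>(x - y) / 2\<bar> * 1"
    by (intro mult_mono abs_sin_x_le_abs_x) auto
  finally show ?thesis by simp
qed

lemma prod_lip:
  fixes P1 P2 c1 c2 x x' y y' Lp Mp :: real
  assumes "\<bar>P1 - P2\<bar> \<le> Lp * \<bar>x - x'\<bar>" "\<bar>P2\<bar> \<le> Mp" "\<bar>c1\<bar> \<le> 1" "\<bar>c1 - c2\<bar> \<le> \<bar>y - y'\<bar>"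
  shows "\<bar>P1 * c1 - P2 * c2\<bar> \<le> Lp * \<bar>x - x'\<bar> + Mp * \<bar>y - y'\<bar>"
proof -
  have "P1 * c1 - P2 * c2 = (P1 - P2) * c1 + P2 * (c1 - c2)" by (simp add: algebra_simps)
  then have "\<bar>P1 * c1 - P2 * c2\<bar> \<le> \<bar>P1 - P2\<bar> * \<bar>c1\<bar> + \<bar>P2\<bar> * \<bar>c1 - c2\<bar>"
    by (simp add: abs_mult[symmetric] abs_triangle_ineq)
  also have "\<bar>P1 - P2\<bar> * \<bar>c1\<bar> \<le> Lp * \<bar>x - x'\<bar>"
    using assms(1,3) mult_mono[of "\<bar>P1 - P2\<bar>" "Lp * \<bar>x - x'\<bar>" "\<bar>c1\<bar>" 1] by simp
  also have "\<bar>P2\<bar> * \<bar>c1 - c2\<bar> \<le> Mp * \<bar>y - y'\<bar>"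
    using assms(2,4) by (intro mult_mono) auto
  finally show ?thesis by simp
qed

lemma P1_deriv:
  assumes "inD a m x"
  shows "((\<lambda>x. sqrt (Qpoly a m x)) has_real_derivative sqrt (Qpoly a m x) * Sf a m x / 2) (at x)"
proof -
  have q: "Qpoly a m x > 0" using Q_pos[OF assms] .
  have eq: "inverse (sqrt (Qpoly a m x)) / 2 * (Qpoly a m x * Sf a m x) = sqrt (Qpoly a m x) * Sf a m x / 2"
  proof -
    have "Qpoly a m x = sqrt (Qpoly a m x) * sqrt (Qpoly a m x)" using q by simp
    then show ?thesis using q by (metis (no_types, lifting) divide_inverse mult.assoc mult.commute
          nonzero_mult_div_cancel_left real_sqrt_gt_0_iff less_irrefl times_divide_eq_right)
  qed
  show ?thesis
    by (subst eq[symmetric]) (rule DERIV_chain2[OF DERIV_real_sqrt[OF q] Q_deriv[OF assms]])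
qed

lemma P2_deriv:
  assumes "inD a m x"
  shows "((\<lambda>x. sqrt (Qpoly a m x) * Sf a m x) has_real_derivative
     sqrt (Qpoly a m x) * Sf a m x / 2 * Sf a m x + Sd a m x * sqrt (Qpoly a m x)) (at x)"
  by (rule DERIV_mult[OF P1_deriv[OF assms] S_deriv[OF assms]])

lemma sol_unfold:
  assumes "is_solution a m u \<theta> \<psi>"
  shows "\<And>t. inD a m (u t)"
    "\<And>t. (u has_real_derivative 2 * sqrt (Qpoly a m (u t)) * cos (\<theta> t)) (at t)"
    "\<And>t. (\<theta> has_real_derivative - sqrt (Qpoly a m (u t)) * sin (\<theta> t) * Sf a m (u t)) (at t)"
    "\<And>t. (\<psi> has_real_derivative - sqrt (Qpoly a m (u t)) * sin (\<theta> t) * Rf a m (u t)) (at t)"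
  using assms unfolding is_solution_def inD_def Sf_def Rf_def by auto

lemma lip_pq:
  assumes Dpq: "\<And>x. x \<in> {p..q} \<Longrightarrow> inD a m x"
  shows "\<exists>L\<ge>0. \<exists>M\<ge>0. (\<forall>x\<in>{p..q}. \<bar>sqrt (Qpoly a m x)\<bar> \<le> M) \<and>
           (\<forall>x\<in>{p..q}. \<forall>y\<in>{p..q}. \<bar>sqrt (Qpoly a m x) - sqrt (Qpoly a m y)\<bar> \<le> L * \<bar>x - y\<bar>)"
    "\<exists>L\<ge>0. \<exists>M\<ge>0. (\<forall>x\<in>{p..q}. \<bar>sqrt (Qpoly a m x) * Sf a m x\<bar> \<le> M) \<and>
           (\<forall>x\<in>{p..q}. \<forall>y\<in>{p..q}. \<bar>sqrt (Qpoly a m x) * Sf a m x - sqrt (Qpoly a m y) * Sf a m y\<bar> \<le> L * \<bar>x - y\<bar>)"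
proof -
  have cS: "continuous_on {p..q} (Sf a m)" by (rule S_cont) (rule Dpq)
  have cSd: "continuous_on {p..q} (Sd a m)" by (rule Sd_cont) (rule Dpq)
  have cQ: "continuous_on {p..q} (Qpoly a m)" by (rule Q_cont)
  show "\<exists>L\<ge>0. \<exists>M\<ge>0. (\<forall>x\<in>{p..q}. \<bar>sqrt (Qpoly a m x)\<bar> \<le> M) \<and>
           (\<forall>x\<in>{p..q}. \<forall>y\<in>{p..q}. \<bar>sqrt (Qpoly a m x) - sqrt (Qpoly a m y)\<bar> \<le> L * \<bar>x - y\<bar>)"
  proof (rule c1_lip)
    show "\<And>x. x \<in> {p..q} \<Longrightarrow> ((\<lambda>x. sqrt (Qpoly a m x)) has_real_derivative sqrt (Qpoly a m x) * Sf a m x / 2) (at x)"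
      by (rule P1_deriv) (rule Dpq)
    show "continuous_on {p..q} (\<lambda>x. sqrt (Qpoly a m x) * Sf a m x / 2)"
      by (intro continuous_intros cS cQ) simp
  qed
  show "\<exists>L\<ge>0. \<exists>M\<ge>0. (\<forall>x\<in>{p..q}. \<bar>sqrt (Qpoly a m x) * Sf a m x\<bar> \<le> M) \<and>
           (\<forall>x\<in>{p..q}. \<forall>y\<in>{p..q}. \<bar>sqrt (Qpoly a m x) * Sf a m x - sqrt (Qpoly a m y) * Sf a m y\<bar> \<le> L * \<bar>x - y\<bar>)"
  proof (rule c1_lip)
    show "\<And>x. x \<in> {p..q} \<Longrightarrow> ((\<lambda>x. sqrt (Qpoly a m x) * Sf a m x) has_real_derivative
        sqrt (Qpoly a m x) * Sf a m x / 2 * Sf a m x + Sd a m x * sqrt (Qpoly a m x)) (at x)"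
      by (rule P2_deriv) (rule Dpq)
    show "continuous_on {p..q} (\<lambda>x. sqrt (Qpoly a m x) * Sf a m x / 2 * Sf a m x + Sd a m x * sqrt (Qpoly a m x))"
      by (intro continuous_intros cS cQ cSd) simp
  qed
qed

lemma uniq_pt:
  assumes s1: "is_solution a m u \<theta> \<psi>" and s2: "is_solution a m v \<eta> ch"
    and i1: "u 0 = v 0" and i2: "\<theta> 0 = \<eta> 0"
  shows "u t = v t \<and> \<theta> t = \<eta> t"
proof -
  note U = sol_unfold[OF s1] and V = sol_unfold[OF s2]
  define \<sigma> :: real where "\<sigma> = (if 0 \<le> t then 1 else -1)"
  define b where "b = \<bar>t\<bar>"
  have \<sigma>b: "\<sigma> * b = t" by (simp add: \<sigma>_def b_def)
  have \<sigma>abs: "\<bar>\<sigma>\<bar> = 1" by (simp add: \<sigma>_def)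
  define I where "I = {min 0 t..max 0 t}"
  have I\<sigma>: "\<sigma> * s \<in> I" if "0 \<le> s" "s \<le> b" for s
    using that by (auto simp: I_def \<sigma>_def b_def)
  have cu: "continuous_on I u" using U(2) by (intro continuous_at_imp_continuous_on ballI DERIV_isCont)
  have cv: "continuous_on I v" using V(2) by (intro continuous_at_imp_continuous_on ballI DERIV_isCont)
  have Ine: "I \<noteq> {}" "compact I" by (auto simp: I_def)
  obtain su where su: "su \<in> I" "\<forall>s\<in>I. u su \<le> u s" using continuous_attains_inf[OF Ine(2,1) cu] by blast
  obtain Su where Su: "Su \<in> I" "\<forall>s\<in>I. u s \<le> u Su" using continuous_attains_sup[OF Ine(2,1) cu] by blast
  obtain sv where sv: "sv \<in> I" "\<forall>s\<in>I. v sv \<le> v s" using continuous_attains_inf[OF Ine(2,1) cv] by blast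
  obtain Sv where Sv: "Sv \<in> I" "\<forall>s\<in>I. v s \<le> v Sv" using continuous_attains_sup[OF Ine(2,1) cv] by blast
  define p where "p = min (u su) (v sv)"
  define q where "q = max (u Su) (v Sv)"
  have Dp: "inD a m p" by (cases "u su \<le> v sv") (simp_all add: p_def U(1) V(1))
  have Dq: "inD a m q" by (cases "u Su \<le> v Sv") (simp_all add: q_def U(1) V(1))
  have Dpq: "inD a m x" if "x \<in> {p..q}" for x using inD_convex[OF Dp Dq] that by auto
  have pq: "p \<le> u su" "p \<le> v sv" "u Su \<le> q" "v Sv \<le> q" by (simp_all add: p_def q_def)
  have inpq: "u s \<in> {p..q}" "v s \<in> {p..q}" if "s \<in> I" for s
  proof -
    have "u su \<le> u s" "u s \<le> u Su" "v sv \<le> v s" "v s \<le> v Sv"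
      using su(2) Su(2) sv(2) Sv(2) that by blast+
    then show "u s \<in> {p..q}" "v s \<in> {p..q}" using pq by auto
  qed
  obtain L1 M1 where L1: "L1 \<ge> 0" "M1 \<ge> 0" "\<forall>x\<in>{p..q}. \<bar>sqrt (Qpoly a m x)\<bar> \<le> M1"
     "\<forall>x\<in>{p..q}. \<forall>y\<in>{p..q}. \<bar>sqrt (Qpoly a m x) - sqrt (Qpoly a m y)\<bar> \<le> L1 * \<bar>x - y\<bar>"
    using lip_pq(1)[OF Dpq] by blast
  obtain L2 M2 where L2: "L2 \<ge> 0" "M2 \<ge> 0" "\<forall>x\<in>{p..q}. \<bar>sqrt (Qpoly a m x) * Sf a m x\<bar> \<le> M2"
     "\<forall>x\<in>{p..q}. \<forall>y\<in>{p..q}. \<bar>sqrt (Qpoly a m x) * Sf a m x - sqrt (Qpoly a m y) * Sf a m y\<bar> \<le> L2 * \<bar>x - y\<bar>"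
    using lip_pq(2)[OF Dpq] by blast
  define L where "L = 2 * L1 + 2 * M1 + L2 + M2"
  have dl: "((\<lambda>s. \<sigma> * s) has_real_derivative \<sigma> * 1) (at s)" for s
    by (rule DERIV_cmult[OF DERIV_ident])
  have "u (\<sigma> * b) = v (\<sigma> * b) \<and> \<theta> (\<sigma> * b) = \<eta> (\<sigma> * b)"
  proof (rule gronwall_zero[where xa="\<lambda>s. u (\<sigma> * s)" and xb="\<lambda>s. \<theta> (\<sigma> * s)"
        and ya="\<lambda>s. v (\<sigma> * s)" and yb="\<lambda>s. \<eta> (\<sigma> * s)" and L=L])
    show "\<And>t. ((\<lambda>s. u (\<sigma> * s)) has_real_derivative
       2 * sqrt (Qpoly a m (u (\<sigma> * t))) * cos (\<theta> (\<sigma> * t)) * (\<sigma> * 1)) (at t)"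
      by (rule DERIV_chain2[OF U(2) dl])
    show "\<And>t. ((\<lambda>s. v (\<sigma> * s)) has_real_derivative
       2 * sqrt (Qpoly a m (v (\<sigma> * t))) * cos (\<eta> (\<sigma> * t)) * (\<sigma> * 1)) (at t)"
      by (rule DERIV_chain2[OF V(2) dl])
    show "\<And>t. ((\<lambda>s. \<theta> (\<sigma> * s)) has_real_derivative
       - sqrt (Qpoly a m (u (\<sigma> * t))) * sin (\<theta> (\<sigma> * t)) * Sf a m (u (\<sigma> * t)) * (\<sigma> * 1)) (at t)"
      by (rule DERIV_chain2[OF U(3) dl])
    show "\<And>t. ((\<lambda>s. \<eta> (\<sigma> * s)) has_real_derivative
       - sqrt (Qpoly a m (v (\<sigma> * t))) * sin (\<eta> (\<sigma> * t)) * Sf a m (v (\<sigma> * t)) * (\<sigma> * 1)) (at t)"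
      by (rule DERIV_chain2[OF V(3) dl])
    show "0 \<le> L" using L1 L2 by (simp add: L_def)
    show "0 \<le> b" by (simp add: b_def)
    show "u (\<sigma> * 0) = v (\<sigma> * 0)" "\<theta> (\<sigma> * 0) = \<eta> (\<sigma> * 0)" using i1 i2 by simp_all
  next
    fix s assume s: "0 \<le> s" "s \<le> b"
    define w where "w = \<sigma> * s"
    have w: "u w \<in> {p..q}" "v w \<in> {p..q}" using inpq I\<sigma>[OF s] by (simp_all add: w_def)
    have "\<bar>sqrt (Qpoly a m (u w)) * cos (\<theta> w) - sqrt (Qpoly a m (v w)) * cos (\<eta> w)\<bar>
        \<le> L1 * \<bar>u w - v w\<bar> + M1 * \<bar>\<theta> w - \<eta> w\<bar>"
      by (rule prod_lip) (use L1 w cos_lip in auto)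
    moreover have "L1 * \<bar>u w - v w\<bar> + M1 * \<bar>\<theta> w - \<eta> w\<bar> \<le> (L1 + M1) * (\<bar>u w - v w\<bar> + \<bar>\<theta> w - \<eta> w\<bar>)"
      using L1 by (simp add: algebra_simps)
    moreover have "2 * (L1 + M1) * (\<bar>u w - v w\<bar> + \<bar>\<theta> w - \<eta> w\<bar>) \<le> L * (\<bar>u w - v w\<bar> + \<bar>\<theta> w - \<eta> w\<bar>)"
      using L2 by (intro mult_right_mono) (auto simp: L_def)
    moreover have "\<bar>2 * sqrt (Qpoly a m (u w)) * cos (\<theta> w) * (\<sigma> * 1) -
          2 * sqrt (Qpoly a m (v w)) * cos (\<eta> w) * (\<sigma> * 1)\<bar>
        = 2 * \<bar>sqrt (Qpoly a m (u w)) * cos (\<theta> w) - sqrt (Qpoly a m (v w)) * cos (\<eta> w)\<bar>"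
    proof -
      have "2 * sqrt (Qpoly a m (u w)) * cos (\<theta> w) * (\<sigma> * 1) -
          2 * sqrt (Qpoly a m (v w)) * cos (\<eta> w) * (\<sigma> * 1)
        = (2 * \<sigma>) * (sqrt (Qpoly a m (u w)) * cos (\<theta> w) - sqrt (Qpoly a m (v w)) * cos (\<eta> w))"
        by (simp add: algebra_simps)
      then show ?thesis using \<sigma>abs by (simp add: abs_mult)
    qed
    ultimately show "\<bar>2 * sqrt (Qpoly a m (u (\<sigma> * s))) * cos (\<theta> (\<sigma> * s)) * (\<sigma> * 1) -
          2 * sqrt (Qpoly a m (v (\<sigma> * s))) * cos (\<eta> (\<sigma> * s)) * (\<sigma> * 1)\<bar>
        \<le> L * (\<bar>u (\<sigma> * s) - v (\<sigma> * s)\<bar> + \<bar>\<theta> (\<sigma> * s) - \<eta> (\<sigma> * s)\<bar>)"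
      unfolding w_def[symmetric] by linarith
  next
    fix s assume s: "0 \<le> s" "s \<le> b"
    define w where "w = \<sigma> * s"
    have w: "u w \<in> {p..q}" "v w \<in> {p..q}" using inpq I\<sigma>[OF s] by (simp_all add: w_def)
    have "\<bar>sqrt (Qpoly a m (u w)) * Sf a m (u w) * sin (\<theta> w) - sqrt (Qpoly a m (v w)) * Sf a m (v w) * sin (\<eta> w)\<bar>
        \<le> L2 * \<bar>u w - v w\<bar> + M2 * \<bar>\<theta> w - \<eta> w\<bar>"
      by (rule prod_lip) (use L2 w sin_lip in auto)
    moreover have "L2 * \<bar>u w - v w\<bar> + M2 * \<bar>\<theta> w - \<eta> w\<bar> \<le> (L2 + M2) * (\<bar>u w - v w\<bar> + \<bar>\<theta> w - \<eta> w\<bar>)"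
      using L2 by (simp add: algebra_simps)
    moreover have "(L2 + M2) * (\<bar>u w - v w\<bar> + \<bar>\<theta> w - \<eta> w\<bar>) \<le> L * (\<bar>u w - v w\<bar> + \<bar>\<theta> w - \<eta> w\<bar>)"
      using L1 by (intro mult_right_mono) (auto simp: L_def)
    moreover have "\<bar>- sqrt (Qpoly a m (u w)) * sin (\<theta> w) * Sf a m (u w) * (\<sigma> * 1) -
          - sqrt (Qpoly a m (v w)) * sin (\<eta> w) * Sf a m (v w) * (\<sigma> * 1)\<bar>
        = \<bar>sqrt (Qpoly a m (u w)) * Sf a m (u w) * sin (\<theta> w) - sqrt (Qpoly a m (v w)) * Sf a m (v w) * sin (\<eta> w)\<bar>"
    proof -
      have "- sqrt (Qpoly a m (u w)) * sin (\<theta> w) * Sf a m (u w) * (\<sigma> * 1) -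
          - sqrt (Qpoly a m (v w)) * sin (\<eta> w) * Sf a m (v w) * (\<sigma> * 1)
        = - \<sigma> * (sqrt (Qpoly a m (u w)) * Sf a m (u w) * sin (\<theta> w) - sqrt (Qpoly a m (v w)) * Sf a m (v w) * sin (\<eta> w))"
        by (simp add: algebra_simps)
      then show ?thesis using \<sigma>abs by (simp add: abs_mult)
    qed
    ultimately show "\<bar>- sqrt (Qpoly a m (u (\<sigma> * s))) * sin (\<theta> (\<sigma> * s)) * Sf a m (u (\<sigma> * s)) * (\<sigma> * 1) -
          - sqrt (Qpoly a m (v (\<sigma> * s))) * sin (\<eta> (\<sigma> * s)) * Sf a m (v (\<sigma> * s)) * (\<sigma> * 1)\<bar>
        \<le> L * (\<bar>u (\<sigma> * s) - v (\<sigma> * s)\<bar> + \<bar>\<theta> (\<sigma> * s) - \<eta> (\<sigma> * s)\<bar>)"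
      unfolding w_def[symmetric] by linarith
  qed
  then show ?thesis using \<sigma>b by simp
qed

lemma uniq:
  assumes s1: "is_solution a m u \<theta> \<psi>" and s2: "is_solution a m v \<eta> ch"
    and i1: "u 0 = v 0" and i2: "\<theta> 0 = \<eta> 0" and i3: "\<psi> 0 = ch 0"
  shows "v = u \<and> \<eta> = \<theta> \<and> ch = \<psi>"
proof -
  have uv: "v = u" "\<eta> = \<theta>" using uniq_pt[OF s1 s2 i1 i2] by auto
  have "\<forall>t. ((\<lambda>t. \<psi> t - ch t) has_real_derivative 0) (at t)"
  proof
    fix t
    from DERIV_diff[OF sol_unfold(4)[OF s1, of t] sol_unfold(4)[OF s2, of t]]
    show "((\<lambda>t. \<psi> t - ch t) has_real_derivative 0) (at t)" using uv by simp
  qed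
  then have "\<psi> t - ch t = \<psi> 0 - ch 0" for t by (rule DERIV_isconst_all)
  then have "ch = \<psi>" using i3 by (auto simp: fun_eq_iff)
  then show ?thesis using uv by simp
qed

lemma sq_eq_nonpos: "(x::real)^2 = y^2 \<Longrightarrow> x \<le> 0 \<Longrightarrow> y \<le> 0 \<Longrightarrow> x = y"
  using power2_eq_iff_nonneg[of "-x" "-y"] by simp

theorem proposition7p11:
  fixes a :: "nat \<Rightarrow> int" and m :: nat and u0 \<theta>0 \<psi>0 :: real
  assumes m3: "m \<ge> 3"
    and sorted: "\<And>i j. 1 \<le> i \<Longrightarrow> i \<le> j \<Longrightarrow> j \<le> m \<Longrightarrow> a i \<le> a j"
    and nonzero: "\<exists>j\<in>{1..m}. a j \<noteq> 0"
    and hcf: "Gcd (a ` {1..m}) = 1"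
    and sum0: "(\<Sum>j=1..m. a j) = 0"
    and dom0: "\<And>j. j \<in> {1..m} \<Longrightarrow> of_int (a j) * u0 + 1 > 0"
    and A_pos: "sqrt (Qpoly a m u0) * sin \<theta>0 > 0"
    and A_lt1: "sqrt (Qpoly a m u0) * sin \<theta>0 < 1"
  shows "\<exists>u \<theta> \<psi>.
           is_solution a m u \<theta> \<psi> \<and> u 0 = u0 \<and> \<theta> 0 = \<theta>0 \<and> \<psi> 0 = \<psi>0 \<and>
           (\<forall>u' \<theta>' \<psi>'. is_solution a m u' \<theta>' \<psi>' \<and> u' 0 = u0 \<and> \<theta>' 0 = \<theta>0 \<and> \<psi>' 0 = \<psi>0
               \<longrightarrow> u' = u \<and> \<theta>' = \<theta> \<and> \<psi>' = \<psi>) \<and>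
           (\<not> (\<exists>c. \<forall>t. u t = c)) \<and> (\<not> (\<exists>c. \<forall>t. \<theta> t = c)) \<and>
           (\<exists>T>0. (\<forall>t. u (t + T) = u t) \<and> (\<forall>t. \<theta> (t + T) = \<theta> t) \<and>
              (\<exists>\<Psi>>0. \<forall>t. \<psi> (t + T) = \<psi> t - \<Psi>))"
proof -
  interpret QS a m using m3 sorted nonzero sum0 by unfold_locales auto
  define A where "A = sqrt (Qpoly a m u0) * sin \<theta>0"
  have A0: "A > 0" "A < 1" using A_pos A_lt1 by (simp_all add: A_def)
  have Du0: "inD a m u0" using dom0 by (simp add: inD_def)
  have Qu0: "Qpoly a m u0 > 0" by (rule Q_pos[OF Du0])
  have sq: "sqrt (Qpoly a m u0) ^ 2 = Qpoly a m u0" using Qu0 by simp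
  have A2: "A^2 = Qpoly a m u0 * (sin \<theta>0)^2" unfolding A_def power_mult_distrib sq ..
  have "Qpoly a m u0 * (sin \<theta>0)^2 \<le> Qpoly a m u0 * 1"
    using Qu0 by (intro mult_left_mono) (auto simp: abs_square_le_1)
  then have QA: "Qpoly a m u0 \<ge> A^2" using A2 by simp
  obtain u1 u2 where r: "inD a m u1" "inD a m u2" "u1 < 0" "0 < u2" "u1 \<le> u0" "u0 \<le> u2"
     "Qpoly a m u1 = A^2" "Qpoly a m u2 = A^2" "\<forall>x. u1 < x \<and> x < u2 \<longrightarrow> Qpoly a m x > A^2"
     "\<forall>x. u1 \<le> x \<and> x \<le> u2 \<longrightarrow> inD a m x"
    using roots[OF A0 Du0 QA] by blast
  have u12: "u1 < u2" using r by simp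
  obtain g g' where gg: "\<forall>x. Qpoly a m x = A^2 + (x - u1) * (u2 - x) * g x"
      "\<forall>x. (g has_real_derivative g' x) (at x)"
    using factor[of u1 u2 A] u12 r(7,8) by auto
  have gpos: "g x > 0" if "u1 \<le> x" "x \<le> u2" for x
    by (rule g_pos[OF gg r(1-4,7,8) A0(1) r(9) that])
  define c where "c = (u1 + u2) / 2"
  define r where "r = (u2 - u1) / 2"
  have rpos: "r > 0" using u12 by (simp add: r_def)
  define s where "s = (u0 - c) / r"
  have s1: "-1 \<le> s" "s \<le> 1" using r(5,6) rpos by (simp_all add: s_def c_def r_def field_simps)
  define \<alpha> where "\<alpha> = arccos s"
  have ca: "cos \<alpha> = s" using s1 by (simp add: \<alpha>_def)
  have sa: "sin \<alpha> \<ge> 0" using arccos_bounded[OF s1] by (simp add: \<alpha>_def sin_ge_zero)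
  define \<phi>0 where "\<phi>0 = (if cos \<theta>0 \<le> 0 then \<alpha> else - \<alpha>)"
  interpret Sol a m A u1 u2 g g' \<phi>0
    using A0 u12 gg gpos r(10) by unfold_locales auto
  have ccr: "cc = c" "rr = r" by (simp_all add: cc_def c_def rr_def r_def)
  have cphi: "cos \<phi>0 = s" by (simp add: \<phi>0_def ca)
  have sphi1: "cos \<theta>0 \<le> 0 \<Longrightarrow> sin \<phi>0 = sin \<alpha>" by (simp add: \<phi>0_def)
  have sphi2: "\<not> cos \<theta>0 \<le> 0 \<Longrightarrow> sin \<phi>0 = - sin \<alpha>" by (simp add: \<phi>0_def)
  have uu0: "uu 0 = u0" using rpos by (simp add: uu_def ph_0 ccr cphi s_def)
  have s0: "sqrt (Q (uu 0)) * sin \<theta>0 = A" by (simp add: uu0 A_def)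
  have c0: "sqrt (Q (uu 0)) * cos \<theta>0 = XX 0"
  proof -
    have "(XX 0)^2 = Q u0 - A^2" using XX_sq[of 0] uu0 by simp
    also have "\<dots> = (sqrt (Q u0) * cos \<theta>0)^2"
      using A2 sq by (simp add: power_mult_distrib cos_squared_eq algebra_simps)
    finally have e: "(XX 0)^2 = (sqrt (Q u0) * cos \<theta>0)^2" .
    have gu0: "sqrt (g u0) \<ge> 0" using gpos[OF r(5) r(6)] by simp
    show ?thesis
    proof (cases "cos \<theta>0 \<le> 0")
      case True
      then have "XX 0 \<le> 0" using sa rpos gu0 uu0
        by (simp add: XX_def ph_0 sphi1 ccr)
      moreover have "sqrt (Q u0) * cos \<theta>0 \<le> 0" using True Qu0 by (intro mult_nonneg_nonpos) auto
      ultimately show ?thesis using sq_eq_nonpos[OF e] uu0 by simp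
    next
      case False
      then have "XX 0 \<ge> 0" using sa rpos gu0 uu0
        by (simp add: XX_def ph_0 sphi2 ccr)
      moreover have "sqrt (Q u0) * cos \<theta>0 \<ge> 0" using False Qu0 by (intro mult_nonneg_nonneg) auto
      ultimately show ?thesis using e uu0 by simp
    qed
  qed
  define \<psi> where "\<psi> t = \<psi>0 + Gp t" for t
  have sol: "is_solution a m uu (th \<theta>0) \<psi>"
    unfolding is_solution_def
  proof (intro conjI allI)
    fix t
    show "\<forall>j\<in>{1..m}. 0 < real_of_int (a j) * uu t + 1" using uu_D[of t] by (simp add: inD_def)
    show "(uu has_real_derivative 2 * sqrt (Q (uu t)) * cos (th \<theta>0 t)) (at t)"
      using uu_deriv[of t] th_props(2)[OF c0 s0, of t] by (simp add: mult.assoc)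
    have e: "sqrt (Q (uu t)) * sin (th \<theta>0 t) = A" by (rule th_props(1)[OF c0 s0])
    have eq: "- sqrt (Q (uu t)) * sin (th \<theta>0 t) * S = - A * S" for S
    proof -
      have "- sqrt (Q (uu t)) * sin (th \<theta>0 t) * S = - (sqrt (Q (uu t)) * sin (th \<theta>0 t)) * S" by simp
      then show ?thesis by (simp only: e)
    qed
    show "(th \<theta>0 has_real_derivative - sqrt (Q (uu t)) * sin (th \<theta>0 t) *
        (\<Sum>j = 1..m. real_of_int (a j) / (real_of_int (a j) * uu t + 1))) (at t)"
      unfolding eq using th_deriv[of \<theta>0 t] unfolding Sf_def .
    have "((\<lambda>t. \<psi>0 + Gp t) has_real_derivative 0 + - A * Rf a m (uu t)) (at t)"
      by (rule DERIV_add[OF DERIV_const Gp(2)])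
    then show "(\<psi> has_real_derivative - sqrt (Q (uu t)) * sin (th \<theta>0 t) *
        (\<Sum>j = 1..m. (real_of_int (a j))\<^sup>2 / (real_of_int (a j) * uu t + 1))) (at t)"
      unfolding eq \<psi>_def[abs_def] Rf_def[symmetric] by simp
  qed
  have init: "uu 0 = u0" "th \<theta>0 0 = \<theta>0" "\<psi> 0 = \<psi>0" using uu0 by (simp_all add: th_def \<psi>_def Gp(1))
  have un: "\<forall>u' \<theta>' \<psi>'. is_solution a m u' \<theta>' \<psi>' \<and> u' 0 = u0 \<and> \<theta>' 0 = \<theta>0 \<and> \<psi>' 0 = \<psi>0
               \<longrightarrow> u' = uu \<and> \<theta>' = th \<theta>0 \<and> \<psi>' = \<psi>"
    using uniq[OF sol] init by auto
  have per: "\<exists>T>0. (\<forall>t. uu (t + T) = uu t) \<and> (\<forall>t. th \<theta>0 (t + T) = th \<theta>0 t) \<and>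
              (\<exists>\<Psi>>0. \<forall>t. \<psi> (t + T) = \<psi> t - \<Psi>)"
  proof (rule exI[of _ TT], intro conjI allI)
    show "TT > 0" by (rule TT_pos)
    show "\<And>t. uu (t + TT) = uu t" by (rule uu_per)
    show "\<And>t. th \<theta>0 (t + TT) = th \<theta>0 t" by (rule th_per)
    show "\<exists>\<Psi>>0. \<forall>t. \<psi> (t + TT) = \<psi> t - \<Psi>"
    proof (rule exI[of _ "- Gp TT"], intro conjI allI)
      show "- Gp TT > 0" using Gp_TT by simp
      fix t show "\<psi> (t + TT) = \<psi> t - - Gp TT" unfolding \<psi>_def using Gp_per[of t] by simp
    qed
  qed
  show ?thesis
    apply (rule exI[of _ uu], rule exI[of _ "th \<theta>0"], rule exI[of _ \<psi>])
    apply (intro conjI)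
    by (rule sol init un uu_nonconst th_nonconst per)+
qed

end
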